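(* Let $\alpha\in[0,1]$ and let $\mathbf u:[0,\infty)\to\mathbb R^N$ be a differentiable solution of $$\frac{d\mathbf u}{dt}+\alpha\, D A\mathbf u+(1-\alpha)\big(A D\mathbf u+U D\mathbf a\big)=\mathbf 0,\qquad U=\operatorname{diag}(\mathbf u).$$ Define the product-rule defect $\Theta:=DA-AD-\operatorname{diag}(D\mathbf a)$ and $\gamma:=\|\operatorname{diag}(D\mathbf a)+(2\alpha-1)\Theta\|_H$. Then for all $t\ge0$ $$\frac{d}{dt}\|\mathbf u\|_H^2=-\mathbf u^T H\big(\operatorname{diag}(D\mathbf a)+(2\alpha-1)\Theta\big)\mathbf u\le\gamma\|\mathbf u\|_H^2,$$ and consequently $\|\mathbf u(t)\|_H^2\le e^{\gamma t}\|\mathbf u(0)\|_H^2$. In particular, for $\alpha=\tfrac12$ one has $\gamma=\|D\mathbf a\|_\infty=\max_i|(D\mathbf a)_i|$.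
   Context: Fix $N\ge2$. $H=\operatorname{diag}(H_{11},\dots,H_{NN})$ with all $H_{ii}>0$; $Q\in\mathbb R^{N\times N}$ satisfies $Q+Q^T=0$ (periodic SBP operator); $D:=H^{-1}Q$. The vector $\mathbf a\in\mathbb R^N$ has entries $a_i>0$ (samples of a positive coefficient $a(x)$ at the nodes) and $A=\operatorname{diag}(\mathbf a)$. For $\mathbf v\in\mathbb R^N$, $\|\mathbf v\|_H^2=\sum_i H_{ii}v_i^2$, and for a matrix $M$, $\|M\|_H=\sup_{\mathbf v\neq0}\|M\mathbf v\|_H/\|\mathbf v\|_H$ (induced norm). *)

theory Defs
  imports "HOL-Analysis.Analysis"
begin

text \<open>Vectors in R^N are modelled as real^'n for a finite index type 'n (N = CARD('n)).\<close>

definition diag_mat :: "real^'n \<Rightarrow> real^'n^'n" where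
  "diag_mat v = (\<chi> i j. if i = j then v $ i else 0)"

definition normH :: "real^'n \<Rightarrow> real^'n \<Rightarrow> real" where
  "normH h v = sqrt (\<Sum>i\<in>UNIV. h $ i * (v $ i)^2)"

definition opnormH :: "real^'n \<Rightarrow> real^'n^'n \<Rightarrow> real" where
  "opnormH h M = (SUP v\<in>{v. v \<noteq> 0}. normH h (M *v v) / normH h v)"

end

theory Submission
  imports Defs
begin

lemma sum_if_mult: "(\<Sum>k\<in>(UNIV::'a::finite set). (if i = k then f k else 0) * (g k::real)) = f i * g i"
proof -
  have "(\<Sum>k\<in>(UNIV::'a set). (if i = k then f k else 0) * g k) = (\<Sum>k\<in>UNIV. if i = k then f k * g k else 0)"
    by (rule sum.cong) auto
  also have "\<dots> = f i * g i" by simp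
  finally show ?thesis .
qed
lemma sum_mult_if: "(\<Sum>k\<in>(UNIV::'a::finite set). (g k::real) * (if k = i then f k else 0)) = g i * f i"
proof -
  have "(\<Sum>k\<in>(UNIV::'a set). g k * (if k = i then f k else 0)) = (\<Sum>k\<in>UNIV. if k = i then g k * f k else 0)"
    by (rule sum.cong) auto
  also have "\<dots> = g i * f i" by simp
  finally show ?thesis .
qed

lemma diag_mv[simp]: "(diag_mat v *v w) $ i = v $ i * w $ i"
  unfolding diag_mat_def matrix_vector_mult_def
  by (simp add: sum_if_mult)

lemma diag_mm[simp]: "(diag_mat v ** B) $ i $ j = v $ i * B $ i $ j"
  unfolding diag_mat_def matrix_matrix_mult_def
  by (simp add: sum_if_mult)

lemma mm_diag[simp]: "(B ** diag_mat v) $ i $ j = B $ i $ j * v $ j"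
  unfolding diag_mat_def matrix_matrix_mult_def
  by (simp add: sum_mult_if)

lemma matrix_inv_eq:
  fixes A B :: "real^'n^'n"
  assumes "A ** B = mat 1" "B ** A = mat 1"
  shows "matrix_inv A = B"
proof -
  have "\<exists>A'. A ** A' = mat 1 \<and> A' ** A = mat 1" using assms by blast
  then have s: "A ** matrix_inv A = mat 1 \<and> matrix_inv A ** A = mat 1"
    unfolding matrix_inv_def by (rule someI_ex)
  have "matrix_inv A = matrix_inv A ** (A ** B)" using assms by (simp add: matrix_mul_rid)
  also have "\<dots> = (matrix_inv A ** A) ** B" by (simp add: matrix_mul_assoc)
  also have "\<dots> = B" using s by (simp add: matrix_mul_lid)
  finally show ?thesis .
qed

lemma diag_mm2[simp]: "diag_mat v ** diag_mat w = diag_mat (\<chi> i. v$i * w$i)"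
  unfolding vec_eq_iff mm_diag by (simp add: diag_mat_def)

lemma inv_diag:
  assumes "\<forall>i. h $ i > (0::real)"
  shows "matrix_inv (diag_mat h) = diag_mat (\<chi> i. 1 / h $ i)"
  apply (rule matrix_inv_eq)
  unfolding diag_mm2
  using assms by (auto simp: vec_eq_iff mat_def diag_mat_def) (metis less_irrefl)+

lemma mv_neg: "(- A) *v x = - (A *v x)" for A :: "real^'n^'m"
  by (simp add: vec_eq_iff matrix_vector_mult_def sum_negf)
lemma mv_scaleR: "(c *\<^sub>R A) *v x = c *\<^sub>R (A *v x)" for A :: "real^'n^'m"
  by (simp add: vec_eq_iff matrix_vector_mult_def sum_distrib_left mult.assoc)

lemma skew_inner:
  fixes Q :: "real^'n^'n"
  assumes "Q + transpose Q = 0"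
  shows "x \<bullet> (Q *v y) = - (y \<bullet> (Q *v x))"
proof -
  have T: "transpose Q = - Q" using assms by (simp add: eq_neg_iff_add_eq_0 add.commute)
  have "x \<bullet> (Q *v y) = (x v* Q) \<bullet> y" by (simp add: dot_lmul_matrix)
  also have "x v* Q = transpose Q *v x" by (simp add: transpose_matrix_vector)
  also have "\<dots> = - (Q *v x)" using T by (simp add: mv_neg)
  finally show ?thesis by (simp add: inner_commute)
qed

lemma key:
  fixes h a u w :: "real^'n" and Q :: "real^'n^'n" and \<alpha> :: real
  assumes hpos: "\<forall>i. h $ i > 0" and Qskew: "Q + transpose Q = 0"
  and D: "D = diag_mat (\<chi> i. 1 / h $ i) ** Q"
  and w: "w = - (\<alpha> *\<^sub>R ((D ** diag_mat a) *v u) + (1 - \<alpha>) *\<^sub>R ((diag_mat a ** D) *v u + diag_mat u *v (D *v a)))"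
  and M: "M = diag_mat (D *v a) + (2 * \<alpha> - 1) *\<^sub>R (D ** diag_mat a - diag_mat a ** D - diag_mat (D *v a))"
  shows "2 * (\<Sum>i\<in>UNIV. h $ i * (u $ i * w $ i)) = - (u \<bullet> (diag_mat h *v (M *v u)))"
proof -
  define au where "au = (\<chi> i. a $ i * u $ i)"
  define S1 where "S1 = (\<Sum>i\<in>UNIV. u $ i * (Q *v au) $ i)"
  define S2 where "S2 = (\<Sum>i\<in>UNIV. au $ i * (Q *v u) $ i)"
  define Y where "Y = (\<Sum>i\<in>UNIV. u $ i * u $ i * (Q *v a) $ i)"
  have hne: "h $ i \<noteq> 0" for i using hpos by (metis less_irrefl)
  have Dv: "(D *v x) $ i = (Q *v x) $ i / h $ i" for x i
    unfolding D by (simp add: matrix_vector_mul_assoc[symmetric])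
  have au: "diag_mat a *v u = au" by (simp add: vec_eq_iff au_def)
  have DAu: "((D ** diag_mat a) *v u) = D *v au"
    by (simp add: matrix_vector_mul_assoc[symmetric] au)
  have ADu: "((diag_mat a ** D) *v u) $ i = a $ i * (D *v u) $ i" for i
    by (simp add: matrix_vector_mul_assoc[symmetric])
  have S21: "S2 = - S1"
    using skew_inner[OF Qskew, of au u] unfolding S1_def S2_def by (simp add: inner_vec_def)
  have wi: "h $ i * (u $ i * w $ i) = - (\<alpha> * (u $ i * (Q *v au) $ i) + (1 - \<alpha>) * (au $ i * (Q *v u) $ i + u $ i * u $ i * (Q *v a) $ i))" for i
    unfolding w DAu using hne[of i] by (simp add: ADu Dv au_def field_simps)
  have L: "2 * (\<Sum>i\<in>UNIV. h $ i * (u $ i * w $ i)) = - 2 * (\<alpha> * S1 + (1 - \<alpha>) * (S2 + Y))"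
  proof -
    have "(\<Sum>i\<in>UNIV. h $ i * (u $ i * w $ i)) = - (\<Sum>i\<in>UNIV. \<alpha> * (u $ i * (Q *v au) $ i) + (1 - \<alpha>) * (au $ i * (Q *v u) $ i + u $ i * u $ i * (Q *v a) $ i))"
      unfolding wi sum_negf by (rule refl)
    also have "(\<Sum>i\<in>UNIV. \<alpha> * (u $ i * (Q *v au) $ i) + (1 - \<alpha>) * (au $ i * (Q *v u) $ i + u $ i * u $ i * (Q *v a) $ i)) = \<alpha> * S1 + (1 - \<alpha>) * (S2 + Y)"
      unfolding S1_def S2_def Y_def by (simp only: sum.distrib sum_distrib_left distrib_left)
    finally show ?thesis by simp
  qed
  have Mi: "h $ i * (M *v u) $ i = u $ i * (Q *v a) $ i + (2 * \<alpha> - 1) * ((Q *v au) $ i - a $ i * (Q *v u) $ i - (Q *v a) $ i * u $ i)" for i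
  proof -
    have Mu: "(M *v u) $ i = (D *v a) $ i * u $ i + (2 * \<alpha> - 1) * ((D *v au) $ i - a $ i * (D *v u) $ i - (D *v a) $ i * u $ i)"
      unfolding M by (simp add: matrix_vector_mult_add_rdistrib matrix_vector_mult_diff_rdistrib mv_scaleR DAu ADu)
    show ?thesis unfolding Mu Dv using hne[of i] by (simp add: field_simps)
  qed
  have R: "u \<bullet> (diag_mat h *v (M *v u)) = Y + (2 * \<alpha> - 1) * (S1 - S2 - Y)"
    unfolding inner_vec_def diag_mv Mi S1_def S2_def Y_def au_def
    by (simp add: sum.distrib sum_distrib_left sum_subtractf algebra_simps)
  show ?thesis unfolding L R S21 by (simp add: algebra_simps)
qed

lemma sumH_nonneg: fixes h v :: "real^'n" assumes "\<forall>i. h $ i > 0" shows "0 \<le> (\<Sum>i\<in>UNIV. h $ i * (v $ i)^2)"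
proof -
  have "0 \<le> h $ i" for i using assms by (simp add: order_less_imp_le)
  then show ?thesis by (intro sum_nonneg mult_nonneg_nonneg zero_le_power2) auto
qed

lemma normH_sq: assumes "\<forall>i. h $ i > 0" shows "(normH h v)^2 = (\<Sum>i\<in>UNIV. h $ i * (v $ i)^2)"
  unfolding normH_def using sumH_nonneg[OF assms, of v] by simp

lemma normH_nonneg: assumes "\<forall>i. h $ i > 0" shows "normH h v \<ge> 0"
  unfolding normH_def using sumH_nonneg[OF assms, of v] by simp

lemma normH_pos: assumes "\<forall>i. h $ i > 0" "v \<noteq> 0" shows "normH h v > 0"
proof -
  obtain k where k: "v $ k \<noteq> 0" using assms(2) by (auto simp: vec_eq_iff)
  have "0 < h $ k * (v $ k)^2" using assms(1) k by simp
  also have "\<dots> \<le> (\<Sum>i\<in>UNIV. h $ i * (v $ i)^2)"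
  proof (rule member_le_sum)
    fix i show "0 \<le> h $ i * (v $ i)^2" using assms(1) less_imp_le[of 0 "h $ i"] by simp
  qed auto
  finally show ?thesis unfolding normH_def by simp
qed

lemma normH_CS:
  assumes "\<forall>i. h $ i > 0"
  shows "- (u \<bullet> (diag_mat h *v x)) \<le> normH h u * normH h x"
proof -
  define p where "p = (\<chi> i. sqrt (h $ i) * u $ i)"
  define q where "q = (\<chi> i. - (sqrt (h $ i) * x $ i))"
  have hp: "h $ i \<ge> 0" for i using assms by (simp add: order_less_imp_le)
  have "- (u \<bullet> (diag_mat h *v x)) = p \<bullet> q"
    unfolding p_def q_def inner_vec_def using hp
    by (simp add: sum_negf[symmetric] algebra_simps)
  also have "\<dots> \<le> norm p * norm q" by (rule norm_cauchy_schwarz)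
  also have "norm p = normH h u"
    unfolding p_def normH_def norm_vec_def L2_set_def using hp by (simp add: power_mult_distrib)
  also have "norm q = normH h x"
    unfolding q_def normH_def norm_vec_def L2_set_def using hp by (simp add: power_mult_distrib)
  finally show ?thesis .
qed

lemma norm_sq_vec: "(norm (w::real^'n))^2 = (\<Sum>i\<in>UNIV. (w $ i)^2)"
  unfolding norm_vec_def L2_set_def by (simp add: sum_nonneg)

lemma normH_upper:
  assumes "\<forall>i. h $ i > 0"
  shows "normH h w \<le> sqrt (Max (range (\<lambda>i. h $ i))) * norm w"
proof -
  let ?m = "Max (range (\<lambda>i. h $ i))"
  have "h $ i \<le> ?m" for i by (rule Max_ge) auto
  then have "(\<Sum>i\<in>UNIV. h $ i * (w $ i)^2) \<le> (\<Sum>i\<in>UNIV. ?m * (w $ i)^2)"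
    by (intro sum_mono mult_right_mono) auto
  also have "\<dots> = ?m * (norm w)^2" by (simp add: norm_sq_vec sum_distrib_left)
  finally have "normH h w \<le> sqrt (?m * (norm w)^2)" unfolding normH_def by simp
  also have "\<dots> = sqrt ?m * norm w" by (simp add: real_sqrt_mult)
  finally show ?thesis .
qed

lemma normH_lower:
  assumes "\<forall>i. h $ i > 0"
  shows "sqrt (Min (range (\<lambda>i. h $ i))) * norm w \<le> normH h w"
proof -
  let ?m = "Min (range (\<lambda>i. h $ i))"
  have "?m \<le> h $ i" for i by (rule Min_le) auto
  then have "(\<Sum>i\<in>UNIV. ?m * (w $ i)^2) \<le> (\<Sum>i\<in>UNIV. h $ i * (w $ i)^2)"
    by (intro sum_mono mult_right_mono) auto
  moreover have "(\<Sum>i\<in>UNIV. ?m * (w $ i)^2) = ?m * (norm w)^2" by (simp add: norm_sq_vec sum_distrib_left)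
  ultimately have "sqrt (?m * (norm w)^2) \<le> normH h w" unfolding normH_def by simp
  moreover have "sqrt (?m * (norm w)^2) = sqrt ?m * norm w" by (simp add: real_sqrt_mult)
  ultimately show ?thesis by simp
qed

lemma opnormH_bdd:
  assumes hpos: "\<forall>i. h $ i > 0"
  shows "bdd_above ((\<lambda>v. normH h (M *v v) / normH h v) ` {v. v \<noteq> 0})"
proof -
  obtain K where K: "\<And>x. norm (M *v x) \<le> norm x * K"
    using bounded_linear.bounded[OF matrix_vector_mul_bounded_linear[of M]] by blast
  let ?M = "Max (range (\<lambda>i. h $ i))" and ?m = "Min (range (\<lambda>i. h $ i))"
  have mpos: "?m > 0" using hpos by (subst Min_gr_iff) auto
  have "h $ i \<le> ?M" for i by (rule Max_ge) auto
  then have Mnn: "?M \<ge> 0" using hpos[rule_format, of undefined] by (metis less_imp_le order_trans)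
  show ?thesis
  proof (rule bdd_aboveI[where M="sqrt ?M * K / sqrt ?m"])
    fix r assume "r \<in> (\<lambda>v. normH h (M *v v) / normH h v) ` {v. v \<noteq> 0}"
    then obtain v where v: "v \<noteq> 0" and r: "r = normH h (M *v v) / normH h v" by auto
    have nv: "norm v > 0" using v by simp
    have "normH h (M *v v) \<le> sqrt ?M * (norm v * K)"
      using normH_upper[OF hpos, of "M *v v"] K[of v] Mnn
      by (meson mult_left_mono order_trans real_sqrt_ge_zero)
    moreover have "sqrt ?m * norm v \<le> normH h v" by (rule normH_lower[OF hpos])
    moreover have "sqrt ?m * norm v > 0" using mpos nv by simp
    ultimately have "r \<le> sqrt ?M * (norm v * K) / (sqrt ?m * norm v)"
      unfolding r by (intro frac_le) (auto intro: order_trans[OF normH_nonneg[OF hpos]])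
    also have "\<dots> = sqrt ?M * K / sqrt ?m" using nv by simp
    finally show "r \<le> sqrt ?M * K / sqrt ?m" .
  qed
qed

lemma opnormH_bound:
  assumes hpos: "\<forall>i. h $ i > 0"
  shows "normH h (M *v v) \<le> opnormH h M * normH h v"
proof (cases "v = 0")
  case True then show ?thesis by (simp add: normH_def)
next
  case False
  have "normH h (M *v v) / normH h v \<le> opnormH h M"
    unfolding opnormH_def by (rule cSUP_upper) (use False opnormH_bdd[OF hpos] in auto)
  moreover have "normH h v > 0" using normH_pos[OF hpos False] .
  ultimately show ?thesis by (simp add: divide_le_eq)
qed

lemma gronwall_simple:
  fixes f f' :: "real \<Rightarrow> real"
  assumes d: "\<forall>t\<ge>0. (f has_real_derivative f' t) (at t within {0..})"
    and le: "\<forall>t\<ge>0. f' t \<le> c * f t"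
    and t: "t \<ge> 0"
  shows "f t \<le> exp (c * t) * f 0"
proof -
  define g where "g s = exp (- c * s) * f s" for s
  define g' where "g' s = exp (- c * s) * (f' s - c * f s)" for s
  have dg: "(g has_real_derivative g' s) (at s within {0..t})" if "0 \<le> s" "s \<le> t" for s
  proof -
    have "(f has_real_derivative f' s) (at s within {0..t})"
      using d that by (auto intro: has_field_derivative_subset)
    then have "((\<lambda>s. exp (- c * s) * f s) has_real_derivative
        (exp (- c * s) * (- c) * f s + exp (- c * s) * f' s)) (at s within {0..t})"
      by (auto intro!: derivative_eq_intros)
    then show ?thesis unfolding g_def g'_def by (simp add: algebra_simps)
  qed
  have "\<exists>x\<in>{0..t}. g t - g 0 = (*) (g' x) (t - 0)"
    by (rule mvt_very_simple[OF t]) (use dg in \<open>auto simp: has_field_derivative_def\<close>)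
  then obtain x where x: "x \<in> {0..t}" and eq: "g t - g 0 = g' x * (t - 0)" by blast
  have "g' x \<le> 0" unfolding g'_def using le x by (auto intro!: mult_nonneg_nonpos)
  then have "g' x * t \<le> 0" using t by (rule mult_nonpos_nonneg)
  then have "g t \<le> g 0" using eq by simp
  then have "exp (- c * t) * f t \<le> f 0" unfolding g_def by simp
  then have "exp (c * t) * (exp (- c * t) * f t) \<le> exp (c * t) * f 0" by simp
  then show ?thesis by (simp add: mult.assoc[symmetric] exp_add[symmetric])
qed

lemma opnormH_diag:
  fixes h d :: "real^'n"
  assumes hpos: "\<forall>i. h $ i > 0"
  shows "opnormH h (diag_mat d) = (MAX i\<in>UNIV. \<bar>d $ i\<bar>)"
proof -
  let ?m = "MAX i\<in>UNIV. \<bar>d $ i\<bar>"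
  have hnn: "0 \<le> h $ i" for i using hpos by (simp add: order_less_imp_le)
  have mge: "\<bar>d $ i\<bar> \<le> ?m" for i by (rule Max_ge) auto
  have mnn: "0 \<le> ?m" using mge[of undefined] by linarith
  have bound: "normH h (diag_mat d *v v) / normH h v \<le> ?m" if "v \<noteq> 0" for v
  proof -
    have pos: "normH h v > 0" using normH_pos[OF hpos that] .
    have "(\<Sum>i\<in>UNIV. h $ i * ((diag_mat d *v v) $ i)^2) \<le> (\<Sum>i\<in>UNIV. ?m^2 * (h $ i * (v $ i)^2))"
    proof (rule sum_mono)
      fix i
      have "(d $ i)^2 \<le> ?m^2" using mge[of i] by (metis abs_ge_zero power2_abs power_mono)
      then have "h $ i * (d $ i)^2 * (v $ i)^2 \<le> h $ i * ?m^2 * (v $ i)^2"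
        by (intro mult_right_mono mult_left_mono hnn) auto
      then show "h $ i * ((diag_mat d *v v) $ i)^2 \<le> ?m^2 * (h $ i * (v $ i)^2)"
        by (simp add: power_mult_distrib algebra_simps)
    qed
    also have "\<dots> = ?m^2 * (\<Sum>i\<in>UNIV. h $ i * (v $ i)^2)" by (simp add: sum_distrib_left)
    finally have "normH h (diag_mat d *v v) \<le> sqrt (?m^2 * (\<Sum>i\<in>UNIV. h $ i * (v $ i)^2))"
      unfolding normH_def by simp
    also have "\<dots> = ?m * normH h v" unfolding normH_def using mnn by (simp add: real_sqrt_mult)
    finally show ?thesis using pos by (simp add: divide_le_eq)
  qed
  have le: "opnormH h (diag_mat d) \<le> ?m"
    unfolding opnormH_def by (rule cSUP_least) (use bound in \<open>auto intro!: exI[of _ "axis undefined 1"] simp: axis_eq_0_iff\<close>)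
  have "?m \<in> (\<lambda>i. \<bar>d $ i\<bar>) ` UNIV" by (rule Max_in) auto
  then obtain k where k: "\<bar>d $ k\<bar> = ?m" by (metis imageE)
  define v where "v = (axis k 1 :: real^'n)"
  have v0: "v \<noteq> 0" unfolding v_def by (simp add: axis_eq_0_iff)
  have nv: "normH h v = sqrt (h $ k)"
  proof -
    have fe: "(\<lambda>i. h $ i * (v $ i)^2) = (\<lambda>i. if i = k then h $ k else 0)"
      by (auto simp: v_def axis_def)
    then have "(\<Sum>i\<in>UNIV. h $ i * (v $ i)^2) = h $ k" by (subst fe) simp
    then show ?thesis unfolding normH_def by simp
  qed
  have ndv: "normH h (diag_mat d *v v) = sqrt (h $ k) * \<bar>d $ k\<bar>"
  proof -
    have fe: "(\<lambda>i. h $ i * ((diag_mat d *v v) $ i)^2) = (\<lambda>i. if i = k then h $ k * (d $ k)^2 else 0)"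
      by (auto simp: v_def axis_def)
    then have "(\<Sum>i\<in>UNIV. h $ i * ((diag_mat d *v v) $ i)^2) = h $ k * (d $ k)^2" by (subst fe) simp
    then show ?thesis unfolding normH_def using hnn[of k] by (simp add: real_sqrt_mult)
  qed
  have "?m = normH h (diag_mat d *v v) / normH h v"
    using k hpos[rule_format, of k] by (simp add: nv ndv)
  also have "\<dots> \<le> opnormH h (diag_mat d)"
    unfolding opnormH_def by (rule cSUP_upper) (use v0 bound in \<open>auto intro!: bdd_aboveI2[where M="?m"]\<close>)
  finally have "?m \<le> opnormH h (diag_mat d)" .
  then show ?thesis using le by linarith
qed

theorem mainTheorem1:
  fixes h :: "real^'n" and Q :: "real^'n^'n" and a :: "real^'n"
    and \<alpha> :: real and u u' :: "real \<Rightarrow> real^'n"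
  assumes N2: "CARD('n) \<ge> 2"
    and hpos: "\<forall>i. h $ i > 0"
    and Qskew: "Q + transpose Q = 0"
    and apos: "\<forall>i. a $ i > 0"
    and alpha: "0 \<le> \<alpha>" "\<alpha> \<le> 1"
    and deriv: "\<forall>t\<ge>0. (u has_vector_derivative u' t) (at t within {0..})"
    and ode: "\<forall>t\<ge>0. u' t
        + \<alpha> *\<^sub>R ((matrix_inv (diag_mat h) ** Q) ** diag_mat a) *v u t
        + (1 - \<alpha>) *\<^sub>R ((diag_mat a ** (matrix_inv (diag_mat h) ** Q)) *v u t
                         + diag_mat (u t) *v ((matrix_inv (diag_mat h) ** Q) *v a)) = 0"
  shows "let H = diag_mat h; D = matrix_inv H ** Q; A = diag_mat a;
             \<Theta> = D ** A - A ** D - diag_mat (D *v a);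
             M = diag_mat (D *v a) + (2 * \<alpha> - 1) *\<^sub>R \<Theta>;
             \<gamma> = opnormH h M
         in (\<forall>t\<ge>0.
               ((\<lambda>s. (normH h (u s))^2) has_real_derivative
                  (- (u t \<bullet> (H *v (M *v u t))))) (at t within {0..})
             \<and> - (u t \<bullet> (H *v (M *v u t))) \<le> \<gamma> * (normH h (u t))^2
             \<and> (normH h (u t))^2 \<le> exp (\<gamma> * t) * (normH h (u 0))^2)
          \<and> (\<alpha> = 1/2 \<longrightarrow> \<gamma> = (MAX i\<in>UNIV. \<bar>(D *v a) $ i\<bar>))"
proof -
  define H where "H = diag_mat h"
  define D where "D = matrix_inv H ** Q"
  define A where "A = diag_mat a"
  define \<Theta> where "\<Theta> = D ** A - A ** D - diag_mat (D *v a)"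
  define M where "M = diag_mat (D *v a) + (2 * \<alpha> - 1) *\<^sub>R \<Theta>"
  define \<gamma> where "\<gamma> = opnormH h M"
  have Dd: "D = diag_mat (\<chi> i. 1 / h $ i) ** Q" unfolding D_def H_def using inv_diag[OF hpos] by simp
  have w: "u' t = - (\<alpha> *\<^sub>R ((D ** A) *v u t) + (1 - \<alpha>) *\<^sub>R ((A ** D) *v u t + diag_mat (u t) *v (D *v a)))"
    if "t \<ge> 0" for t
  proof -
    have "u' t + \<alpha> *\<^sub>R ((D ** A) *v u t) + (1 - \<alpha>) *\<^sub>R ((A ** D) *v u t + diag_mat (u t) *v (D *v a)) = 0"
      using ode that unfolding D_def H_def A_def by (simp add: mv_scaleR)
    then show ?thesis by (subst eq_neg_iff_add_eq_0) (simp only: add.assoc)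
  qed
  have dnorm: "((\<lambda>s. (normH h (u s))^2) has_real_derivative (- (u t \<bullet> (H *v (M *v u t))))) (at t within {0..})"
    if t: "t \<ge> 0" for t
  proof -
    have comp: "((\<lambda>s. u s $ i) has_real_derivative (u' t $ i)) (at t within {0..})" for i
      using bounded_linear.has_vector_derivative[OF bounded_linear_vec_nth deriv[rule_format, OF t], of i]
      by (simp add: has_real_derivative_iff_has_vector_derivative)
    have "((\<lambda>s. \<Sum>i\<in>UNIV. h $ i * (u s $ i)^2) has_real_derivative
           (\<Sum>i\<in>UNIV. h $ i * (2 * (u t $ i) * u' t $ i))) (at t within {0..})"
      by (intro DERIV_sum DERIV_cmult) (auto intro!: derivative_eq_intros comp)
    moreover have "(\<Sum>i\<in>UNIV. h $ i * (2 * (u t $ i) * u' t $ i)) = 2 * (\<Sum>i\<in>UNIV. h $ i * (u t $ i * u' t $ i))"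
      by (simp add: sum_distrib_left algebra_simps)
    moreover have "2 * (\<Sum>i\<in>UNIV. h $ i * (u t $ i * u' t $ i)) = - (u t \<bullet> (H *v (M *v u t)))"
      unfolding H_def by (rule key[OF hpos Qskew Dd w[OF t, unfolded A_def]]) (simp add: M_def \<Theta>_def A_def)
    moreover have "(\<lambda>s. (normH h (u s))^2) = (\<lambda>s. \<Sum>i\<in>UNIV. h $ i * (u s $ i)^2)"
      using normH_sq[OF hpos] by auto
    ultimately show ?thesis by simp
  qed
  have ineq: "- (u t \<bullet> (H *v (M *v u t))) \<le> \<gamma> * (normH h (u t))^2" for t
  proof -
    have "- (u t \<bullet> (H *v (M *v u t))) \<le> normH h (u t) * normH h (M *v u t)"
      unfolding H_def by (rule normH_CS[OF hpos])
    also have "\<dots> \<le> normH h (u t) * (\<gamma> * normH h (u t))"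
      unfolding \<gamma>_def by (rule mult_left_mono[OF opnormH_bound[OF hpos] normH_nonneg[OF hpos]])
    finally show ?thesis by (simp add: power2_eq_square algebra_simps)
  qed
  have gr: "(normH h (u t))^2 \<le> exp (\<gamma> * t) * (normH h (u 0))^2" if "t \<ge> 0" for t
    by (rule gronwall_simple[where f'="\<lambda>t. - (u t \<bullet> (H *v (M *v u t)))"]) (use dnorm ineq that in auto)
  have half: "\<alpha> = 1/2 \<longrightarrow> \<gamma> = (MAX i\<in>UNIV. \<bar>(D *v a) $ i\<bar>)"
  proof
    assume "\<alpha> = 1/2"
    then have "M = diag_mat (D *v a)" unfolding M_def by simp
    then show "\<gamma> = (MAX i\<in>UNIV. \<bar>(D *v a) $ i\<bar>)" unfolding \<gamma>_def using opnormH_diag[OF hpos] by simp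
  qed
  show ?thesis
    unfolding Let_def H_def[symmetric] D_def[symmetric] A_def[symmetric] \<Theta>_def[symmetric] M_def[symmetric] \<gamma>_def[symmetric]
    using dnorm ineq gr half by blast
qed

end
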